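(* Let $k$ be a positive integer, $A\subseteq[k]$, and let $c_\alpha\in\mathbb{Z}$ for each $\alpha\in A$. Suppose that for all pairs $\alpha,\alpha'\in A$: (1) $\mathrm{lcm}(\alpha,\alpha')\in A$, and (2) $(c_{\alpha'}-c_\alpha)\cdot\mathrm{lcm}(\alpha,\alpha')\equiv 0\pmod k$. Then there exists $c\in\mathbb{Z}$ such that $(c-c_\alpha)\alpha\equiv 0\pmod k$ for all $\alpha\in A$.
   Context: $[k]=\{1,\dots,k\}$. *)

theory Defs
  imports Main "HOL-Number_Theory.Cong"
begin

end

theory Submission
  imports Defs "HOL-Computational_Algebra.Primes"
begin

lemma crt2:
  fixes M N u v :: int
  assumes "gcd M N dvd u - v"
  shows "\<exists>y. M dvd y - u \<and> N dvd y - v"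
proof -
  obtain q where q: "u - v = gcd M N * q" using assms by (auto elim: dvdE)
  obtain s t where st: "s * M + t * N = gcd M N" using bezout_int by blast
  define y where "y = u - s * M * q"
  have "y - u = M * (- s * q)" unfolding y_def by (simp add: algebra_simps)
  moreover have "y - v = N * (t * q)"
  proof -
    have "y - v = (u - v) - s * M * q" unfolding y_def by simp
    also have "\<dots> = (s * M + t * N) * q - s * M * q" using q st by simp
    also have "\<dots> = N * (t * q)" by (simp add: algebra_simps)
    finally show ?thesis .
  qed
  ultimately show ?thesis by (metis dvd_triv_left)
qed

lemma gcd_Lcm_dvd:
  fixes m :: "'a \<Rightarrow> int" and n e :: int
  assumes "finite S" "\<forall>a\<in>S. gcd (m a) n dvd e"
  shows "gcd (Lcm (m ` S)) n dvd e"
  using assms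
proof (induction S rule: finite_induct)
  case empty
  then show ?case by simp
next
  case (insert b S)
  have "gcd (Lcm (m ` insert b S)) n = gcd n (lcm (m b) (Lcm (m ` S)))"
    by (simp add: gcd.commute)
  also have "\<dots> = lcm (gcd n (m b)) (gcd n (Lcm (m ` S)))"
    by (rule gcd_lcm_distrib)
  finally show ?case using insert
    by (simp add: gcd.commute lcm_least)
qed

lemma crt_set:
  fixes m r :: "'a \<Rightarrow> int"
  assumes "finite S" "\<forall>a\<in>S. \<forall>b\<in>S. gcd (m a) (m b) dvd r a - r b"
  shows "\<exists>x. \<forall>a\<in>S. m a dvd x - r a"
  using assms
proof (induction S rule: finite_induct)
  case empty
  then show ?case by simp
next
  case (insert b S)
  then obtain x where x: "\<forall>a\<in>S. m a dvd x - r a" by auto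
  have "\<forall>a\<in>S. gcd (m a) (m b) dvd x - r b"
  proof
    fix a assume a: "a \<in> S"
    have "gcd (m a) (m b) dvd x - r a" using x a by (meson dvd_trans gcd_dvd1)
    moreover have "gcd (m a) (m b) dvd r a - r b" using insert.prems a by auto
    ultimately have "gcd (m a) (m b) dvd (x - r a) + (r a - r b)" by (rule dvd_add)
    then show "gcd (m a) (m b) dvd x - r b" by simp
  qed
  then have "gcd (Lcm (m ` S)) (m b) dvd x - r b"
    using gcd_Lcm_dvd[OF insert.hyps(1)] by blast
  then obtain y where y: "Lcm (m ` S) dvd y - x" "m b dvd y - r b"
    using crt2 by blast
  have "\<forall>a\<in>S. m a dvd y - r a"
  proof
    fix a assume a: "a \<in> S"
    have "m a dvd y - x" using y(1) a by (meson dvd_Lcm dvd_trans imageI)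
    moreover have "m a dvd x - r a" using x a by auto
    ultimately have "m a dvd (y - x) + (x - r a)" by (rule dvd_add)
    then show "m a dvd y - r a" by simp
  qed
  with y(2) show ?case by auto
qed

theorem lemma3p10:
  fixes k :: nat and A :: "nat set" and c :: "nat \<Rightarrow> int"
  assumes "k > 0"
    and "A \<subseteq> {1..k}"
    and "\<And>a a'. a \<in> A \<Longrightarrow> a' \<in> A \<Longrightarrow> lcm a a' \<in> A"
    and "\<And>a a'. a \<in> A \<Longrightarrow> a' \<in> A \<Longrightarrow>
           [(c a' - c a) * int (lcm a a') = 0] (mod int k)"
  shows "\<exists>c0 :: int. \<forall>a \<in> A. [(c0 - c a) * int a = 0] (mod int k)"
proof -
  define K where "K = int k"
  have K0: "K > 0" using assms(1) K_def by simp
  define m where "m a = K div gcd K (int a)" for a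
  have mg: "m a * gcd K (int a) = K" for a
    unfolding m_def by simp
  have fin: "finite A" using assms(2) finite_subset by blast
  have compat: "gcd (m a) (m b) dvd c a - c b" if a: "a \<in> A" and b: "b \<in> A" for a b
  proof -
    define d where "d = gcd (m a) (m b)"
    define G where "G = gcd K (int (lcm a b))"
    have d0: "d \<ge> 0" unfolding d_def by simp
    have "d * gcd K (int a) dvd K"
      by (metis d_def gcd_dvd1 mg mult_dvd_mono dvd_refl)
    moreover have "d * gcd K (int b) dvd K"
      by (metis d_def gcd_dvd2 mg mult_dvd_mono dvd_refl)
    ultimately have "lcm (d * gcd K (int a)) (d * gcd K (int b)) dvd K"
      by (rule lcm_least)
    moreover have "lcm (d * gcd K (int a)) (d * gcd K (int b)) = d * lcm (gcd K (int a)) (gcd K (int b))"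
      using lcm_mult_distrib'[of d "gcd K (int a)" "gcd K (int b)"] d0 by simp
    moreover have "lcm (gcd K (int a)) (gcd K (int b)) = G"
      unfolding G_def by (simp add: gcd_lcm_distrib flip: lcm_int_int_eq)
    ultimately have dG: "d * G dvd K" by simp
    have hK: "K dvd (c b - c a) * int (lcm a b)"
      using assms(4)[OF a b] K_def by (simp add: cong_0_iff)
    obtain s t where st: "s * K + t * int (lcm a b) = G"
      using bezout_int G_def by blast
    have "K dvd (c b - c a) * G"
    proof -
      have "(c b - c a) * G = K * (s * (c b - c a)) + t * ((c b - c a) * int (lcm a b))"
        using st[symmetric] by (simp add: algebra_simps)
      then show ?thesis using hK by (simp add: dvd_add dvd_mult)
    qed
    with dG have "d * G dvd (c b - c a) * G" by (rule dvd_trans)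
    moreover have "G \<noteq> 0" unfolding G_def using K0 by simp
    ultimately have "d dvd c b - c a" by simp
    then show ?thesis unfolding d_def by (simp add: dvd_diff_commute)
  qed
  obtain x where x: "\<forall>a\<in>A. m a dvd x - c a"
    using crt_set[OF fin, of m c] compat by blast
  have "[(x - c a) * int a = 0] (mod int k)" if a: "a \<in> A" for a
  proof -
    obtain q where q: "x - c a = m a * q" using x a by (auto elim: dvdE)
    obtain r where r: "int a = gcd K (int a) * r" using gcd_dvd2[of K "int a"] unfolding dvd_def by blast
    have "(x - c a) * int a = (m a * gcd K (int a)) * (q * r)"
      using q r by (simp add: algebra_simps)
    then have "K dvd (x - c a) * int a" using mg by simp
    then show ?thesis using K_def by (simp add: cong_0_iff)
  qed
  then show ?thesis by blast
qed

end
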